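(* Let $\Omega\subseteq\mathbb{R}^3$ be open and connected, and let $R\in C^2(\Omega;SO(3))$ be such that $\operatorname{curl}R=\alpha$ for some constant $\alpha\in\mathbb{R}^{3\times3}$. Then $R$ is constant.
   Context: $SO(3)$ is the group of $3\times3$ rotation matrices. For a matrix field $R$, $\operatorname{curl}$ is applied row-wise: $(\operatorname{curl}R)_{ij}=\varepsilon_{jkl}\partial_kR_{il}$ (Einstein summation, $\varepsilon_{jkl}$ the sign of the permutation $(jkl)$). *)

theory Defs
  imports "HOL-Analysis.Analysis"
begin

definition levi_civita :: "3 \<Rightarrow> 3 \<Rightarrow> 3 \<Rightarrow> real" where
  "levi_civita j k l =
     (if card {j, k, l} = 3
      then real_of_int (sign (\<lambda>r::3. if r = 1 then j else if r = 2 then k else l))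
      else 0)"

definition partial_deriv :: "3 \<Rightarrow> (real^3 \<Rightarrow> 'b::real_normed_vector) \<Rightarrow> real^3 \<Rightarrow> 'b" where
  "partial_deriv k f x = frechet_derivative f (at x) (axis k 1)"

definition curl_mat :: "(real^3 \<Rightarrow> real^3^3) \<Rightarrow> real^3 \<Rightarrow> real^3^3" where
  "curl_mat R x = (\<chi> i j. \<Sum>k\<in>UNIV. \<Sum>l\<in>UNIV.
       levi_civita j k l * (partial_deriv k R x) $ i $ l)"

definition C2_on :: "(real^3) set \<Rightarrow> (real^3 \<Rightarrow> 'b::real_normed_vector) \<Rightarrow> bool" where
  "C2_on S f \<longleftrightarrow> (\<exists>f' :: real^3 \<Rightarrow> ((real^3) \<Rightarrow>\<^sub>L 'b).
      \<exists>f'' :: real^3 \<Rightarrow> ((real^3) \<Rightarrow>\<^sub>L ((real^3) \<Rightarrow>\<^sub>L 'b)).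
      (\<forall>x\<in>S. (f has_derivative blinfun_apply (f' x)) (at x)) \<and>
      (\<forall>x\<in>S. (f' has_derivative blinfun_apply (f'' x)) (at x)) \<and>
      continuous_on S f'')"

end

theory Submission
  imports Defs
begin

lemma second_diff_est:
  fixes g :: "'a::real_normed_vector \<Rightarrow> real" and G :: "'a \<Rightarrow> 'a \<Rightarrow> real"
  assumes S: "open S" "x \<in> S"
   and dg: "\<And>y. y \<in> S \<Longrightarrow> (g has_derivative G y) (at y)"
   and du: "((\<lambda>y. G y u) has_derivative Hu) (at x)"
   and e: "e > 0"
  shows "\<exists>d>0. \<forall>t. 0 < t \<and> t < d \<longrightarrow>
     \<bar>(g (x + t *\<^sub>R u + t *\<^sub>R v) - g (x + t *\<^sub>R u) - g (x + t *\<^sub>R v) + g x) - t^2 * Hu v\<bar>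
        \<le> e * t^2 * (2 * norm u + norm v)"
proof -
  obtain r where r: "r > 0" "ball x r \<subseteq> S" using S openE by blast
  have blHu: "bounded_linear Hu" using du has_derivative_bounded_linear by blast
  obtain d0 where d0: "d0 > 0" and
    d0': "\<And>y. norm (y - x) < d0 \<Longrightarrow> \<bar>G y u - G x u - Hu (y - x)\<bar> \<le> e * norm (y - x)"
    using du e unfolding has_derivative_at_alt by (metis real_norm_def)
  define d where "d = min r d0 / (norm u + norm v + 1)"
  have npos: "norm u + norm v + 1 > 0" using norm_ge_zero[of u] norm_ge_zero[of v] by linarith
  have dpos: "d > 0" using r d0 npos unfolding d_def by (intro divide_pos_pos) auto
  show ?thesis
  proof (intro exI[of _ d] conjI dpos allI impI)
    fix t :: real assume t: "0 < t \<and> t < d"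
    have tb: "t * (norm u + norm v) < min r d0"
    proof -
      have "t * (norm u + norm v) \<le> t * (norm u + norm v + 1)" using t by simp
      also have "\<dots> < d * (norm u + norm v + 1)"
        using t npos by (intro mult_strict_right_mono) auto
      also have "\<dots> = min r d0" unfolding d_def using npos by simp
      finally show ?thesis .
    qed
    have nrm: "norm (s *\<^sub>R u + t' *\<^sub>R v) < min r d0" if "0 \<le> s" "s \<le> t" "0 \<le> t'" "t' \<le> t" for s t'
    proof -
      have "norm (s *\<^sub>R u + t' *\<^sub>R v) \<le> norm (s *\<^sub>R u) + norm (t' *\<^sub>R v)"
        by (rule norm_triangle_ineq)
      also have "\<dots> = s * norm u + t' * norm v" using that by simp
      also have "\<dots> \<le> t * (norm u + norm v)"
        using that by (simp add: distrib_left add_mono mult_right_mono)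
      finally show ?thesis using tb by linarith
    qed
    define \<phi> where "\<phi> s = g (x + s *\<^sub>R u + t *\<^sub>R v) - g (x + s *\<^sub>R u)" for s
    define \<phi>' where "\<phi>' s = G (x + s *\<^sub>R u + t *\<^sub>R v) u - G (x + s *\<^sub>R u) u" for s
    have der: "DERIV \<phi> s :> \<phi>' s" if "0 \<le> s" "s \<le> t" for s
    proof -
      have dd: "dist x (x + w) = norm w" for w
        by (metis dist_commute dist_norm add_diff_cancel_left')
      have in1: "x + s *\<^sub>R u + t *\<^sub>R v \<in> S"
        using nrm[of s t] that t dd[of "s *\<^sub>R u + t *\<^sub>R v"] r(2) by (auto simp: add.assoc)
      have in2: "x + s *\<^sub>R u \<in> S"
        using nrm[of s 0] that t dd[of "s *\<^sub>R u"] r(2) by auto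
      have lin1: "linear (G (x + s *\<^sub>R u + t *\<^sub>R v))"
        using dg[OF in1] has_derivative_linear by blast
      have lin2: "linear (G (x + s *\<^sub>R u))"
        using dg[OF in2] has_derivative_linear by blast
      have c1: "((\<lambda>s. x + s *\<^sub>R u + t *\<^sub>R v) has_derivative (\<lambda>h. h *\<^sub>R u)) (at s)"
        by (auto intro!: derivative_eq_intros)
      have c2: "((\<lambda>s. x + s *\<^sub>R u) has_derivative (\<lambda>h. h *\<^sub>R u)) (at s)"
        by (auto intro!: derivative_eq_intros)
      have h1: "((\<lambda>s. g (x + s *\<^sub>R u + t *\<^sub>R v)) has_derivative (\<lambda>h. G (x + s *\<^sub>R u + t *\<^sub>R v) (h *\<^sub>R u))) (at s)"
        using has_derivative_compose[OF c1 dg[OF in1]] by (simp add: o_def)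
      have h2: "((\<lambda>s. g (x + s *\<^sub>R u)) has_derivative (\<lambda>h. G (x + s *\<^sub>R u) (h *\<^sub>R u))) (at s)"
        using has_derivative_compose[OF c2 dg[OF in2]] by (simp add: o_def)
      have "(\<phi> has_derivative (\<lambda>h. G (x + s *\<^sub>R u + t *\<^sub>R v) (h *\<^sub>R u) - G (x + s *\<^sub>R u) (h *\<^sub>R u))) (at s)"
        unfolding \<phi>_def by (rule has_derivative_diff[OF h1 h2])
      moreover have "(\<lambda>h. G (x + s *\<^sub>R u + t *\<^sub>R v) (h *\<^sub>R u) - G (x + s *\<^sub>R u) (h *\<^sub>R u)) = (*) (\<phi>' s)"
      proof (rule ext)
        fix h :: real
        have 1: "G (x + s *\<^sub>R u + t *\<^sub>R v) (h *\<^sub>R u) = h * G (x + s *\<^sub>R u + t *\<^sub>R v) u"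
          using linear_scale[OF lin1, of h u] by simp
        have 2: "G (x + s *\<^sub>R u) (h *\<^sub>R u) = h * G (x + s *\<^sub>R u) u"
          using linear_scale[OF lin2, of h u] by simp
        show "G (x + s *\<^sub>R u + t *\<^sub>R v) (h *\<^sub>R u) - G (x + s *\<^sub>R u) (h *\<^sub>R u) = \<phi>' s * h"
          unfolding 1 2 \<phi>'_def by (simp add: algebra_simps)
      qed
      ultimately show ?thesis by (simp add: has_field_derivative_def)
    qed
    obtain \<xi> where xi: "0 < \<xi>" "\<xi> < t" "\<phi> t - \<phi> 0 = (t - 0) * \<phi>' \<xi>"
      using MVT2[of 0 t \<phi> \<phi>'] der t by auto
    have a1: "\<bar>G (x + \<xi> *\<^sub>R u + t *\<^sub>R v) u - G x u - Hu (\<xi> *\<^sub>R u + t *\<^sub>R v)\<bar> \<le> e * norm (\<xi> *\<^sub>R u + t *\<^sub>R v)"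
      using d0'[of "x + \<xi> *\<^sub>R u + t *\<^sub>R v"] nrm[of \<xi> t] xi by (simp add: add.assoc)
    have a2: "\<bar>G (x + \<xi> *\<^sub>R u) u - G x u - Hu (\<xi> *\<^sub>R u)\<bar> \<le> e * norm (\<xi> *\<^sub>R u)"
      using d0'[of "x + \<xi> *\<^sub>R u"] nrm[of \<xi> 0] xi by simp
    have n1: "norm (\<xi> *\<^sub>R u + t *\<^sub>R v) \<le> t * norm u + t * norm v"
    proof -
      have "norm (\<xi> *\<^sub>R u + t *\<^sub>R v) \<le> norm (\<xi> *\<^sub>R u) + norm (t *\<^sub>R v)"
        by (rule norm_triangle_ineq)
      also have "\<dots> = \<xi> * norm u + t * norm v" using xi t by simp
      also have "\<dots> \<le> t * norm u + t * norm v" using xi by (simp add: mult_right_mono)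
      finally show ?thesis .
    qed
    have n2: "norm (\<xi> *\<^sub>R u) \<le> t * norm u"
      using xi by (simp add: mult_right_mono)
    have lin: "Hu (\<xi> *\<^sub>R u + t *\<^sub>R v) - Hu (\<xi> *\<^sub>R u) = t * Hu v"
      using bounded_linear.linear[OF blHu] by (simp add: linear_add linear_scale)
    have eqd: "g (x + t *\<^sub>R u + t *\<^sub>R v) - g (x + t *\<^sub>R u) - g (x + t *\<^sub>R v) + g x = t * \<phi>' \<xi>"
      using xi(3) by (simp add: \<phi>_def)
    have "\<bar>\<phi>' \<xi> - t * Hu v\<bar> \<le> e * (t * norm u + t * norm v) + e * (t * norm u)"
    proof -
      have "\<bar>\<phi>' \<xi> - t * Hu v\<bar> = \<bar>(G (x + \<xi> *\<^sub>R u + t *\<^sub>R v) u - G x u - Hu (\<xi> *\<^sub>R u + t *\<^sub>R v))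
          - (G (x + \<xi> *\<^sub>R u) u - G x u - Hu (\<xi> *\<^sub>R u))\<bar>"
        using lin by (simp add: \<phi>'_def algebra_simps)
      also have "\<dots> \<le> e * norm (\<xi> *\<^sub>R u + t *\<^sub>R v) + e * norm (\<xi> *\<^sub>R u)"
        using a1 a2 by linarith
      also have "\<dots> \<le> e * (t * norm u + t * norm v) + e * (t * norm u)"
        using n1 n2 e by (intro add_mono mult_left_mono) auto
      finally show ?thesis .
    qed
    then have "t * \<bar>\<phi>' \<xi> - t * Hu v\<bar> \<le> t * (e * (t * norm u + t * norm v) + e * (t * norm u))"
      using t by (intro mult_left_mono) auto
    then show "\<bar>(g (x + t *\<^sub>R u + t *\<^sub>R v) - g (x + t *\<^sub>R u) - g (x + t *\<^sub>R v) + g x) - t^2 * Hu v\<bar>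
        \<le> e * t^2 * (2 * norm u + norm v)"
    proof -
      have eq: "t * \<phi>' \<xi> - t^2 * Hu v = t * (\<phi>' \<xi> - t * Hu v)"
        by (simp add: power2_eq_square algebra_simps)
      have "\<bar>t * (\<phi>' \<xi> - t * Hu v)\<bar> = t * \<bar>\<phi>' \<xi> - t * Hu v\<bar>" using t by (simp add: abs_mult)
      with \<open>t * \<bar>\<phi>' \<xi> - t * Hu v\<bar> \<le> _\<close> show ?thesis
        unfolding eqd eq by (simp add: power2_eq_square algebra_simps)
    qed
  qed
qed

lemma small_eq_zero:
  fixes a K :: real
  assumes K: "K \<ge> 0" and h: "\<And>e. e > 0 \<Longrightarrow> \<bar>a\<bar> \<le> e * K"
  shows "a = 0"
proof (rule ccontr)
  assume "a \<noteq> 0"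
  then have pa: "\<bar>a\<bar> > 0" by simp
  define e where "e = \<bar>a\<bar> / (2 * (K + 1))"
  have "e > 0" using pa K by (simp add: e_def)
  from h[OF this] have "\<bar>a\<bar> \<le> \<bar>a\<bar> * (K / (2 * (K + 1)))" by (simp add: e_def)
  moreover have "K / (2 * (K + 1)) < 1" using K by (simp add: divide_less_eq)
  ultimately show False using pa mult_strict_left_mono[of "K / (2 * (K + 1))" 1 "\<bar>a\<bar>"] by linarith
qed

lemma mixed_sym:
  fixes g :: "'a::real_normed_vector \<Rightarrow> real" and G :: "'a \<Rightarrow> 'a \<Rightarrow> real"
  assumes S: "open S" "x \<in> S"
   and dg: "\<And>y. y \<in> S \<Longrightarrow> (g has_derivative G y) (at y)"
   and du: "((\<lambda>y. G y u) has_derivative Hu) (at x)"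
   and dv: "((\<lambda>y. G y v) has_derivative Hv) (at x)"
  shows "Hu v = Hv u"
proof -
  have "Hu v - Hv u = 0"
  proof (rule small_eq_zero[of "3 * (norm u + norm v)"])
    show "0 \<le> 3 * (norm u + norm v)" by simp
    fix e :: real assume e: "e > 0"
    obtain d1 where d1: "d1 > 0" "\<forall>t. 0 < t \<and> t < d1 \<longrightarrow>
     \<bar>(g (x + t *\<^sub>R u + t *\<^sub>R v) - g (x + t *\<^sub>R u) - g (x + t *\<^sub>R v) + g x) - t^2 * Hu v\<bar>
        \<le> e * t^2 * (2 * norm u + norm v)"
      using second_diff_est[OF S dg du e, of v] by blast
    obtain d2 where d2: "d2 > 0" "\<forall>t. 0 < t \<and> t < d2 \<longrightarrow>
     \<bar>(g (x + t *\<^sub>R v + t *\<^sub>R u) - g (x + t *\<^sub>R v) - g (x + t *\<^sub>R u) + g x) - t^2 * Hv u\<bar>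
        \<le> e * t^2 * (2 * norm v + norm u)"
      using second_diff_est[OF S dg dv e, of u] by blast
    define t where "t = min d1 d2 / 2"
    have t: "0 < t" "t < d1" "t < d2" using d1 d2 by (auto simp: t_def)
    have sw: "x + t *\<^sub>R v + t *\<^sub>R u = x + t *\<^sub>R u + t *\<^sub>R v" by (simp add: algebra_simps)
    define D where "D = g (x + t *\<^sub>R u + t *\<^sub>R v) - g (x + t *\<^sub>R u) - g (x + t *\<^sub>R v) + g x"
    have A: "\<bar>D - t^2 * Hu v\<bar> \<le> e * t^2 * (2 * norm u + norm v)"
      using d1(2) t unfolding D_def by blast
    have B: "\<bar>D - t^2 * Hv u\<bar> \<le> e * t^2 * (2 * norm v + norm u)"
    proof -
      have "\<bar>(g (x + t *\<^sub>R v + t *\<^sub>R u) - g (x + t *\<^sub>R v) - g (x + t *\<^sub>R u) + g x) - t^2 * Hv u\<bar>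
        \<le> e * t^2 * (2 * norm v + norm u)" using d2(2) t by blast
      moreover have "g (x + t *\<^sub>R v + t *\<^sub>R u) - g (x + t *\<^sub>R v) - g (x + t *\<^sub>R u) + g x = D"
        unfolding sw D_def by simp
      ultimately show ?thesis by simp
    qed
    have "\<bar>t^2 * (Hu v - Hv u)\<bar> \<le> e * t^2 * (2 * norm u + norm v) + e * t^2 * (2 * norm v + norm u)"
    proof -
      have "t^2 * (Hu v - Hv u) = (D - t^2 * Hv u) - (D - t^2 * Hu v)" by (simp add: algebra_simps)
      then have "\<bar>t^2 * (Hu v - Hv u)\<bar> \<le> \<bar>D - t^2 * Hv u\<bar> + \<bar>D - t^2 * Hu v\<bar>"
        by (metis abs_triangle_ineq4)
      then show ?thesis using A B by linarith
    qed
    also have "\<dots> = t^2 * (e * (3 * (norm u + norm v)))" by (simp add: algebra_simps)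
    finally have "t^2 * \<bar>Hu v - Hv u\<bar> \<le> t^2 * (e * (3 * (norm u + norm v)))"
      using t by (simp add: abs_mult)
    then show "\<bar>Hu v - Hv u\<bar> \<le> e * (3 * (norm u + norm v))"
      using t by (simp add: mult_le_cancel_left)
  qed
  then show ?thesis by simp
qed


lemma three_distinct: "(1::3) \<noteq> 2" "(1::3) \<noteq> 3" "(2::3) \<noteq> 3"
  by simp_all

lemma lc_zero: "j = k \<or> j = l \<or> k = l \<Longrightarrow> levi_civita j k l = 0"
proof -
  assume "j = k \<or> j = l \<or> k = l"
  then have "card {j, k, l} \<le> 2" by (auto simp: card_insert_if)
  then show ?thesis by (simp add: levi_civita_def)
qed

lemma lc_nonzero: "j \<noteq> k \<Longrightarrow> j \<noteq> l \<Longrightarrow> k \<noteq> l \<Longrightarrow> levi_civita j k l \<noteq> 0"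
  by (simp add: levi_civita_def card_insert_if sign_def)

lemma lc_antisym: "levi_civita j l k = - levi_civita j k l"
proof (cases "j = k \<or> j = l \<or> k = l")
  case True then show ?thesis using lc_zero[of j k l] lc_zero[of j l k] by auto
next
  case False
  define p where "p = (\<lambda>r::3. if r = 1 then j else if r = 2 then k else l)"
  define q where "q = (\<lambda>r::3. if r = 1 then j else if r = 2 then l else k)"
  have qp: "q = p \<circ> Transposition.transpose 2 3"
    by (rule ext) (use exhaust_3 in \<open>auto simp: p_def q_def Transposition.transpose_def\<close>)
  have "inj p"
    unfolding inj_def p_def using False exhaust_3 by metis
  then have "bij p" using finite_UNIV_inj_surj[of p] by (simp add: bij_def)
  then have pp: "permutation p" by (simp add: permutation)
  have "sign q = - sign p"
    unfolding qp by (simp add: sign_compose[OF pp permutation_swap_id] sign_swap_id)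
  moreover have "card {j, l, k} = card {j, k, l}" by (simp add: insert_commute)
  ultimately show ?thesis by (simp add: levi_civita_def p_def q_def)
qed


lemma sos_final:
  fixes w :: "3 \<Rightarrow> 3 \<Rightarrow> 3 \<Rightarrow> real"
  assumes skew: "\<And>k p a. w k p a = - w k a p"
    and main: "(\<Sum>j\<in>UNIV. \<Sum>k\<in>UNIV. \<Sum>p\<in>UNIV. w j p j * w k p k + w k p j * w j p k)
       = 2 * (\<Sum>j\<in>UNIV. \<Sum>p\<in>UNIV. \<Sum>q\<in>UNIV. w j q p * w j q p)"
  shows "w k p a = 0"
proof -
  define om where "om k (q::3) = (if q = 1 then w k 3 2 else if q = 2 then w k 1 3 else w k 2 1)" for k q
  have d: "w k p p = 0" for k p using skew[of k p p] by simp
  have o1: "om k 1 = w k 3 2" and o2: "om k 2 = w k 1 3" and o3: "om k 3 = w k 2 1" for k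
    by (simp_all add: om_def)
  have rules: "w k 1 1 = 0" "w k 2 2 = 0" "w k 3 3 = 0"
    "w k 1 2 = - om k 3" "w k 1 3 = om k 2" "w k 2 1 = om k 3" "w k 2 3 = - om k 1"
    "w k 3 1 = - om k 2" "w k 3 2 = om k 1" for k
    using d skew[of k 1 2] skew[of k 2 3] skew[of k 3 1] by (simp_all add: o1 o2 o3)
  define P where "P = (\<Sum>k\<in>UNIV. \<Sum>q\<in>UNIV. (om k q)^2) + (1/2) * (\<Sum>i\<in>UNIV. \<Sum>j\<in>UNIV. (om i j + om j i)^2)
      + (\<Sum>i\<in>UNIV. om i i)^2"
  have id: "P = 2 * (\<Sum>j\<in>UNIV. \<Sum>p\<in>UNIV. \<Sum>q\<in>UNIV. w j q p * w j q p)
      - (\<Sum>j\<in>UNIV. \<Sum>k\<in>UNIV. \<Sum>p\<in>UNIV. w j p j * w k p k + w k p j * w j p k)"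
    unfolding P_def by (simp only: sum_3 rules) (simp add: power2_eq_square algebra_simps)
  have P0: "P = 0" using id main by simp
  have nn1: "0 \<le> (1/2) * (\<Sum>i\<in>UNIV. \<Sum>j\<in>UNIV. (om i j + om j i)^2)"
    by (intro mult_nonneg_nonneg sum_nonneg) auto
  have le1: "(om k q)^2 \<le> (\<Sum>k\<in>UNIV. \<Sum>q\<in>UNIV. (om k q)^2)" for k q
  proof -
    have "(om k q)^2 \<le> (\<Sum>q\<in>UNIV. (om k q)^2)"
      by (rule member_le_sum) auto
    also have "(\<Sum>q\<in>UNIV. (om k q)^2) \<le> (\<Sum>k\<in>UNIV. \<Sum>q\<in>UNIV. (om k q)^2)"
      by (rule member_le_sum[of k UNIV "\<lambda>k. \<Sum>q\<in>UNIV. (om k q)^2"]) (auto intro: sum_nonneg)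
    finally show ?thesis .
  qed
  have "(om k q)^2 \<le> P" for k q unfolding P_def using nn1 le1[of k q] zero_le_power2[of "\<Sum>i\<in>UNIV. om i i"] by linarith
  then have oz: "om k q = 0" for k q using P0 by (metis le_zero_eq zero_le_power2 power_eq_0_iff antisym)
  show ?thesis using exhaust_3[of p] exhaust_3[of a] rules[of k] oz by auto
qed

lemma lc_key1:
  fixes X :: "3 \<Rightarrow> 3 \<Rightarrow> real"
  shows "(\<Sum>k'\<in>UNIV. \<Sum>l'\<in>UNIV. levi_civita 1 k' l' * X k' l') = levi_civita 1 2 3 * (X 2 3 - X 3 2)"
  by (simp add: sum_3 lc_zero lc_antisym[of 1 2 3] algebra_simps)

lemma lc_key2:
  fixes X :: "3 \<Rightarrow> 3 \<Rightarrow> real"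
  shows "(\<Sum>k'\<in>UNIV. \<Sum>l'\<in>UNIV. levi_civita 2 k' l' * X k' l') = levi_civita 2 3 1 * (X 3 1 - X 1 3)"
  by (simp add: sum_3 lc_zero lc_antisym[of 2 3 1] algebra_simps)

lemma lc_key3:
  fixes X :: "3 \<Rightarrow> 3 \<Rightarrow> real"
  shows "(\<Sum>k'\<in>UNIV. \<Sum>l'\<in>UNIV. levi_civita 3 k' l' * X k' l') = levi_civita 3 1 2 * (X 1 2 - X 2 1)"
  by (simp add: sum_3 lc_zero lc_antisym[of 3 1 2] algebra_simps)

lemma sum_delta3: "(\<Sum>j\<in>(UNIV::3 set). (if i = j then 1 else 0) * (f j::real)) = f i"
proof -
  have "(\<Sum>j\<in>(UNIV::3 set). (if i = j then 1 else 0) * (f j::real)) = (\<Sum>j\<in>UNIV. if i = j then f j else 0)"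
    by (rule sum.cong) auto
  also have "\<dots> = f i" by simp
  finally show ?thesis .
qed

lemma alg:
  fixes r :: "3 \<Rightarrow> 3 \<Rightarrow> real" and d :: "3 \<Rightarrow> 3 \<Rightarrow> 3 \<Rightarrow> real"
    and h :: "3 \<Rightarrow> 3 \<Rightarrow> 3 \<Rightarrow> 3 \<Rightarrow> real"
  assumes A2: "\<And>a b. (\<Sum>i\<in>UNIV. r a i * r b i) = (if a = b then 1 else 0)"
    and B: "\<And>k a b. (\<Sum>i\<in>UNIV. r i a * d k i b + d k i a * r i b) = 0"
    and C: "\<And>m k i a. h m k i a = h k m i a"
    and D: "\<And>m i j. (\<Sum>k\<in>UNIV. \<Sum>l\<in>UNIV. levi_civita j k l * h m k i l) = 0"
    and E: "\<And>j k a b. (\<Sum>i\<in>UNIV. d j i a * d k i b + r i a * h j k i b + h j k i a * r i b + d k i a * d j i b) = 0"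
  shows "d k i a = 0"
proof -
  define w where "w k p a = (\<Sum>i\<in>UNIV. r i p * d k i a)" for k p a
  define H where "H m k p a = (\<Sum>i\<in>UNIV. r i p * h m k i a)" for m k p a
  have d_w: "d k i a = (\<Sum>p\<in>UNIV. r i p * w k p a)" for k i a
  proof -
    have "(\<Sum>p\<in>UNIV. r i p * w k p a) = (\<Sum>p\<in>UNIV. \<Sum>j\<in>UNIV. r i p * r j p * d k j a)"
      by (simp add: w_def sum_distrib_left mult.assoc)
    also have "\<dots> = (\<Sum>j\<in>UNIV. \<Sum>p\<in>UNIV. r i p * r j p * d k j a)" by (rule sum.swap)
    also have "\<dots> = (\<Sum>j\<in>UNIV. (\<Sum>p\<in>UNIV. r i p * r j p) * d k j a)" by (simp add: sum_distrib_right)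
    also have "\<dots> = (\<Sum>j\<in>UNIV. (if i = j then 1 else 0) * d k j a)" by (simp add: A2)
    also have "\<dots> = d k i a" by (rule sum_delta3)
    finally show ?thesis by simp
  qed
  have skew: "w k p a = - w k a p" for k p a
  proof -
    have "w k p a + w k a p = (\<Sum>i\<in>UNIV. r i p * d k i a + d k i p * r i a)"
      by (simp add: w_def sum.distrib mult.commute)
    also have "\<dots> = 0" by (rule B)
    finally show ?thesis by simp
  qed
  have dd: "(\<Sum>i\<in>UNIV. d j i a * d k i b) = (\<Sum>p\<in>UNIV. w j p a * w k p b)" for j k a b
  proof -
    have "(\<Sum>p\<in>UNIV. w j p a * w k p b) = (\<Sum>p\<in>UNIV. \<Sum>i\<in>UNIV. \<Sum>l\<in>UNIV. (r i p * r l p) * (d j i a * d k l b))"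
      by (simp add: w_def sum_product mult_ac)
    also have "\<dots> = (\<Sum>i\<in>UNIV. \<Sum>p\<in>UNIV. \<Sum>l\<in>UNIV. (r i p * r l p) * (d j i a * d k l b))"
      by (rule sum.swap)
    also have "\<dots> = (\<Sum>i\<in>UNIV. \<Sum>l\<in>UNIV. \<Sum>p\<in>UNIV. (r i p * r l p) * (d j i a * d k l b))"
      by (rule sum.cong[OF refl], rule sum.swap)
    also have "\<dots> = (\<Sum>i\<in>UNIV. \<Sum>l\<in>UNIV. (\<Sum>p\<in>UNIV. r i p * r l p) * (d j i a * d k l b))"
      by (simp add: sum_distrib_right)
    also have "\<dots> = (\<Sum>i\<in>UNIV. \<Sum>l\<in>UNIV. (if i = l then 1 else 0) * (d j i a * d k l b))"
      by (simp add: A2)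
    also have "\<dots> = (\<Sum>i\<in>UNIV. d j i a * d k i b)"
      by (rule sum.cong[OF refl]) (rule sum_delta3)
    finally show ?thesis by simp
  qed
  have E': "(\<Sum>p\<in>UNIV. w j p a * w k p b) + H j k a b + H j k b a + (\<Sum>p\<in>UNIV. w k p a * w j p b) = 0" for j k a b
  proof -
    have "0 = (\<Sum>i\<in>UNIV. d j i a * d k i b + r i a * h j k i b + h j k i a * r i b + d k i a * d j i b)"
      using E by simp
    also have "\<dots> = (\<Sum>i\<in>UNIV. d j i a * d k i b) + H j k a b + H j k b a + (\<Sum>i\<in>UNIV. d k i a * d j i b)"
      by (simp add: sum.distrib H_def mult.commute)
    finally show ?thesis by (simp add: dd)
  qed
  have s23: "h m 2 i 3 = h m 3 i 2" for m i
    using D[where m=m and i=i and j=1] lc_key1[of "\<lambda>k' l'. h m k' i l'"] lc_nonzero[of 1 2 3] by simp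
  have s31: "h m 3 i 1 = h m 1 i 3" for m i
    using D[where m=m and i=i and j=2] lc_key2[of "\<lambda>k' l'. h m k' i l'"] lc_nonzero[of 2 3 1] by simp
  have s12: "h m 1 i 2 = h m 2 i 1" for m i
    using D[where m=m and i=i and j=3] lc_key3[of "\<lambda>k' l'. h m k' i l'"] lc_nonzero[of 3 1 2] by simp
  have hsym: "h m k i l = h m l i k" for m k i l
    using exhaust_3[of k] exhaust_3[of l] s23[of m i] s31[of m i] s12[of m i] by auto
  have Hs1: "H m k p l = H m l p k" for m k p l by (simp add: H_def hsym)
  have Hs2: "H m k p l = H k m p l" for m k p l by (simp add: H_def C)
  have e1: "(\<Sum>q\<in>UNIV. w j q p * w j q p) = - H j j p p" for j p
    using E'[where j=j and k=j and a=p and b=p] by simp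
  have e2: "(\<Sum>p\<in>UNIV. w j p j * w k p k + w k p j * w j p k) = - H k k j j - H j j k k" for j k
  proof -
    have "H j k j k = H k k j j" using Hs2[where m=j and k=k and p=j and l=k] Hs1[where m=k and k=j and p=j and l=k] by simp
    moreover have "H j k k j = H j j k k" using Hs1[where m=j and k=k and p=k and l=j] by simp
    ultimately show ?thesis using E'[where j=j and k=k and a=j and b=k] by (simp add: sum.distrib)
  qed
  have main: "(\<Sum>j\<in>UNIV. \<Sum>k\<in>UNIV. \<Sum>p\<in>UNIV. w j p j * w k p k + w k p j * w j p k)
       = 2 * (\<Sum>j\<in>UNIV. \<Sum>p\<in>UNIV. \<Sum>q\<in>UNIV. w j q p * w j q p)"
  proof -
    have "(\<Sum>j\<in>UNIV. \<Sum>k\<in>UNIV. \<Sum>p\<in>UNIV. w j p j * w k p k + w k p j * w j p k)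
       = (\<Sum>j\<in>UNIV. \<Sum>k\<in>UNIV. - H k k j j - H j j k k)" by (simp add: e2)
    also have "\<dots> = - (\<Sum>j\<in>UNIV. \<Sum>k\<in>UNIV. H k k j j) - (\<Sum>j\<in>UNIV. \<Sum>k\<in>UNIV. H j j k k)"
      by (simp add: sum.distrib sum_subtractf sum_negf)
    also have "(\<Sum>j\<in>UNIV. \<Sum>k\<in>UNIV. H k k j j) = (\<Sum>j\<in>UNIV. \<Sum>k\<in>UNIV. H j j k k)"
      by (rule sum.swap)
    also have "(\<Sum>j\<in>UNIV. \<Sum>k\<in>UNIV. H j j k k) = - (\<Sum>j\<in>UNIV. \<Sum>p\<in>UNIV. \<Sum>q\<in>UNIV. w j q p * w j q p)"
      by (simp add: e1 sum_negf)
    finally show ?thesis by simp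
  qed
  have wz: "w k p a = 0" for k p a by (rule sos_final[OF skew main])
  show ?thesis by (simp add: d_w wz)
qed

lemma deriv_const_zero:
  fixes F :: "'a::real_normed_vector \<Rightarrow> 'b::real_normed_vector"
  assumes "open S" "x \<in> S" "(F has_derivative F') (at x)" "\<And>y. y \<in> S \<Longrightarrow> F y = c"
  shows "F' h = 0"
proof -
  have "((\<lambda>y. c) has_derivative (\<lambda>h. 0)) (at x)" by simp
  then have "(F has_derivative (\<lambda>h. 0)) (at x)"
    by (rule has_derivative_transform_within_open[OF _ assms(1,2)]) (simp add: assms(4))
  then have "F' = (\<lambda>h. 0)" using has_derivative_unique assms(3) by blast
  then show ?thesis by simp
qed

lemma nth2_deriv:
  fixes R :: "'a::real_normed_vector \<Rightarrow> real^3^3"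
  assumes "(R has_derivative R') F"
  shows "((\<lambda>y. R y $ i $ a) has_derivative (\<lambda>h. R' h $ i $ a)) F"
proof -
  have "((\<lambda>y. R y $ i) has_derivative (\<lambda>h. R' h $ i)) F"
    using bounded_linear.has_derivative[OF bounded_linear_vec_nth assms] by simp
  then show ?thesis
    using bounded_linear.has_derivative[OF bounded_linear_vec_nth] by blast
qed

lemma blin_deriv:
  fixes f' :: "'a::real_normed_vector \<Rightarrow> ('c::real_normed_vector \<Rightarrow>\<^sub>L (real^3^3))"
  assumes "(f' has_derivative blinfun_apply L) F"
  shows "((\<lambda>y. blinfun_apply (f' y) v $ i $ a) has_derivative (\<lambda>h. blinfun_apply (L h) v $ i $ a)) F"
proof -
  have "((\<lambda>y. blinfun_apply (f' y) v) has_derivative (\<lambda>h. blinfun_apply (L h) v)) F"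
    using bounded_linear.has_derivative[OF blinfun.bounded_linear_left assms] by simp
  then show ?thesis by (rule nth2_deriv)
qed

theorem theorem4p4:
  fixes \<Omega> :: "(real^3) set" and R :: "real^3 \<Rightarrow> real^3^3" and \<alpha> :: "real^3^3"
  assumes "open \<Omega>" and "connected \<Omega>"
    and "C2_on \<Omega> R"
    and "\<forall>x\<in>\<Omega>. rotation_matrix (R x)"
    and "\<forall>x\<in>\<Omega>. curl_mat R x = \<alpha>"
  shows "\<exists>C. \<forall>x\<in>\<Omega>. R x = C"
proof -
  note op = assms(1)
  obtain f' :: "real^3 \<Rightarrow> ((real^3) \<Rightarrow>\<^sub>L (real^3^3))"
    and f'' :: "real^3 \<Rightarrow> ((real^3) \<Rightarrow>\<^sub>L ((real^3) \<Rightarrow>\<^sub>L (real^3^3)))"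
    where dR: "\<And>y. y \<in> \<Omega> \<Longrightarrow> (R has_derivative blinfun_apply (f' y)) (at y)"
      and dF: "\<And>y. y \<in> \<Omega> \<Longrightarrow> (f' has_derivative blinfun_apply (f'' y)) (at y)"
    using assms(3) unfolding C2_on_def by blast
  define e :: "3 \<Rightarrow> real^3" where "e k = axis k 1" for k
  have orth1: "(\<Sum>i\<in>UNIV. R y $ i $ a * R y $ i $ b) = (if a = b then 1 else 0)" if "y \<in> \<Omega>" for y a b
  proof -
    have "transpose (R y) ** R y = mat 1"
      using assms(4) that unfolding rotation_matrix_def orthogonal_matrix_def by blast
    then have "(transpose (R y) ** R y) $ a $ b = mat 1 $ a $ b" by simp
    then show ?thesis by (simp add: matrix_matrix_mult_def transpose_def mat_def)
  qed
  have orth2: "(\<Sum>i\<in>UNIV. R y $ a $ i * R y $ b $ i) = (if a = b then 1 else 0)" if "y \<in> \<Omega>" for y a b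
  proof -
    have "R y ** transpose (R y) = mat 1"
      using assms(4) that unfolding rotation_matrix_def orthogonal_matrix_def by blast
    then have "(R y ** transpose (R y)) $ a $ b = mat 1 $ a $ b" by simp
    then show ?thesis by (simp add: matrix_matrix_mult_def transpose_def mat_def)
  qed
  have Bd: "(\<Sum>i\<in>UNIV. R y $ i $ a * blinfun_apply (f' y) h $ i $ b + blinfun_apply (f' y) h $ i $ a * R y $ i $ b) = 0"
    if y: "y \<in> \<Omega>" for y a b h
  proof -
    have "((\<lambda>z. \<Sum>i\<in>UNIV. R z $ i $ a * R z $ i $ b) has_derivative
        (\<lambda>h. \<Sum>i\<in>UNIV. R y $ i $ a * blinfun_apply (f' y) h $ i $ b + blinfun_apply (f' y) h $ i $ a * R y $ i $ b)) (at y)"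
      by (intro has_derivative_sum has_derivative_mult nth2_deriv dR[OF y])
    note DD = this
    show ?thesis
      by (rule deriv_const_zero[OF op y DD, where c = "if a = b then 1 else 0"]) (simp add: orth1)
  qed
  have curl_eq: "(\<Sum>k\<in>UNIV. \<Sum>l\<in>UNIV. levi_civita j k l * blinfun_apply (f' y) (e k) $ i $ l) = \<alpha> $ i $ j"
    if y: "y \<in> \<Omega>" for y i j
  proof -
    have pd: "partial_deriv k R y = blinfun_apply (f' y) (e k)" for k
      unfolding partial_deriv_def e_def using frechet_derivative_at[OF dR[OF y]] by simp
    have "curl_mat R y $ i $ j = \<alpha> $ i $ j" using assms(5) y by simp
    then show ?thesis by (simp add: curl_mat_def pd)
  qed
  have dzero: "blinfun_apply (f' x) (e k) $ i $ a = 0" if x: "x \<in> \<Omega>" for x k i a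
  proof (rule alg[where r = "\<lambda>i a. R x $ i $ a" and d = "\<lambda>k i a. blinfun_apply (f' x) (e k) $ i $ a"
        and h = "\<lambda>m k i a. blinfun_apply (blinfun_apply (f'' x) (e m)) (e k) $ i $ a"])
    show "(\<Sum>i\<in>UNIV. R x $ a $ i * R x $ b $ i) = (if a = b then 1 else 0)" for a b
      by (rule orth2[OF x])
    show "(\<Sum>i\<in>UNIV. R x $ i $ a * blinfun_apply (f' x) (e k) $ i $ b + blinfun_apply (f' x) (e k) $ i $ a * R x $ i $ b) = 0" for k a b
      by (rule Bd[OF x])
    show "blinfun_apply (blinfun_apply (f'' x) (e m)) (e k) $ i $ a = blinfun_apply (blinfun_apply (f'' x) (e k)) (e m) $ i $ a" for m k i a
    proof -
      have "(\<lambda>h. blinfun_apply (blinfun_apply (f'' x) h) (e k) $ i $ a) (e m) = (\<lambda>h. blinfun_apply (blinfun_apply (f'' x) h) (e m) $ i $ a) (e k)"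
        by (rule mixed_sym[OF op x, where g = "\<lambda>y. R y $ i $ a" and G = "\<lambda>y h. blinfun_apply (f' y) h $ i $ a"])
          (auto intro: nth2_deriv dR blin_deriv dF x)
      then show ?thesis by simp
    qed
    show "(\<Sum>k\<in>UNIV. \<Sum>l\<in>UNIV. levi_civita j k l * blinfun_apply (blinfun_apply (f'' x) (e m)) (e k) $ i $ l) = 0" for m i j
    proof -
      have "((\<lambda>y. \<Sum>k\<in>UNIV. \<Sum>l\<in>UNIV. levi_civita j k l * blinfun_apply (f' y) (e k) $ i $ l) has_derivative
         (\<lambda>h. \<Sum>k\<in>UNIV. \<Sum>l\<in>UNIV. levi_civita j k l * blinfun_apply (blinfun_apply (f'' x) h) (e k) $ i $ l)) (at x)"
        by (intro has_derivative_sum has_derivative_mult_right blin_deriv dF[OF x])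
      note DD = this
      show ?thesis
        by (rule deriv_const_zero[OF op x DD, where c = "\<alpha> $ i $ j"]) (simp add: curl_eq)
    qed
    show "(\<Sum>i\<in>UNIV. blinfun_apply (f' x) (e j) $ i $ a * blinfun_apply (f' x) (e k) $ i $ b
          + R x $ i $ a * blinfun_apply (blinfun_apply (f'' x) (e j)) (e k) $ i $ b
          + blinfun_apply (blinfun_apply (f'' x) (e j)) (e k) $ i $ a * R x $ i $ b
          + blinfun_apply (f' x) (e k) $ i $ a * blinfun_apply (f' x) (e j) $ i $ b) = 0" for j k a b
    proof -
      have "((\<lambda>y. \<Sum>i\<in>UNIV. R y $ i $ a * blinfun_apply (f' y) (e k) $ i $ b + blinfun_apply (f' y) (e k) $ i $ a * R y $ i $ b) has_derivative
         (\<lambda>h. \<Sum>i\<in>UNIV. (R x $ i $ a * blinfun_apply (blinfun_apply (f'' x) h) (e k) $ i $ b + blinfun_apply (f' x) h $ i $ a * blinfun_apply (f' x) (e k) $ i $ b)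
            + (blinfun_apply (f' x) (e k) $ i $ a * blinfun_apply (f' x) h $ i $ b + blinfun_apply (blinfun_apply (f'' x) h) (e k) $ i $ a * R x $ i $ b))) (at x)"
        by (intro has_derivative_sum has_derivative_add has_derivative_mult nth2_deriv blin_deriv dR[OF x] dF[OF x])
      note DD = this
      have "(\<lambda>h. \<Sum>i\<in>UNIV. (R x $ i $ a * blinfun_apply (blinfun_apply (f'' x) h) (e k) $ i $ b + blinfun_apply (f' x) h $ i $ a * blinfun_apply (f' x) (e k) $ i $ b)
            + (blinfun_apply (f' x) (e k) $ i $ a * blinfun_apply (f' x) h $ i $ b + blinfun_apply (blinfun_apply (f'' x) h) (e k) $ i $ a * R x $ i $ b)) (e j) = 0"
        by (rule deriv_const_zero[OF op x DD, where c = 0]) (simp add: Bd)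
      then show ?thesis by (simp add: algebra_simps)
    qed
  qed
  have f'zero: "blinfun_apply (f' x) = (\<lambda>h. 0)" if x: "x \<in> \<Omega>" for x
  proof (rule linear_eq_stdbasis)
    show "linear (blinfun_apply (f' x))" by (rule bounded_linear.linear[OF blinfun.bounded_linear_right])
    show "linear (\<lambda>h::real^3. 0::real^3^3)" by (simp add: linear_zero)
    fix b :: "real^3" assume "b \<in> Basis"
    then obtain k where b: "b = e k" by (auto simp: Basis_vec_def e_def)
    show "blinfun_apply (f' x) b = 0" unfolding b
      using dzero[OF x] by (simp add: vec_eq_iff)
  qed
  have cont: "continuous_on \<Omega> R"
    using dR by (meson has_derivative_continuous continuous_at_imp_continuous_on)
  have "R constant_on \<Omega>"
  proof (rule has_derivative_zero_connected_constant_on[OF assms(2) op, where K = "{}"])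
    show "finite {}" by simp
    show "continuous_on \<Omega> R" by (rule cont)
    show "\<forall>x\<in>\<Omega> - {}. (R has_derivative (\<lambda>h. 0)) (at x within \<Omega>)"
      using dR f'zero by (metis Diff_empty has_derivative_at_withinI)
  qed
  then show ?thesis unfolding constant_on_def by blast
qed

end
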